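(* The average mid-height of the symmetric Dyck paths of length $2n$ (i.e. from $(0,0)$ to $(2n,0)$) equals $$\frac{2^{2m}-\binom{2m}{m}}{\binom{2m}{m}}\ \text{ if } n=2m,\qquad \frac{2^{2m+1}-\binom{2m+1}{m}}{\binom{2m+1}{m}}\ \text{ if } n=2m+1,$$ and in both cases it is asymptotic to $\sqrt{\pi m}$ as $m\to\infty$.
   Context: A Dyck path of length $2n$ is a lattice path from $(0,0)$ to $(2n,0)$ with steps $U=(1,1)$, $D=(1,-1)$ never going below the $x$-axis. It is symmetric if it is invariant under reflection in the line $x=n$ (its $i$-th step is $U$ iff its $(2n+1-i)$-th step is $D$). Its mid-height is the $y$-coordinate of its vertex with $x$-coordinate $n$. The average is taken uniformly over all symmetric Dyck paths of length $2n$. *)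

theory Defs
  imports Complex_Main "HOL-Library.Landau_Symbols"
begin

text \<open>A path is a list of steps; True = U = (1,1), False = D = (1,-1).\<close>

definition height :: "bool list \<Rightarrow> int" where
  "height ys = int (length (filter (\<lambda>s. s) ys)) - int (length (filter (\<lambda>s. \<not> s) ys))"

definition dyck_path :: "nat \<Rightarrow> bool list \<Rightarrow> bool" where
  "dyck_path n xs \<longleftrightarrow> length xs = 2 * n \<and> (\<forall>k \<le> 2 * n. height (take k xs) \<ge> 0) \<and> height xs = 0"

text \<open>Symmetric: the i-th step (1-based) is U iff the (2n+1-i)-th step is D;
  0-based: xs!i is U iff xs!(2n-1-i) is D.\<close>
definition symmetric_path :: "nat \<Rightarrow> bool list \<Rightarrow> bool" where
  "symmetric_path n xs \<longleftrightarrow> (\<forall>i < 2 * n. xs ! i = (\<not> xs ! (2 * n - 1 - i)))"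

definition sym_dyck_paths :: "nat \<Rightarrow> bool list set" where
  "sym_dyck_paths n = {xs. dyck_path n xs \<and> symmetric_path n xs}"

definition mid_height :: "nat \<Rightarrow> bool list \<Rightarrow> int" where
  "mid_height n xs = height (take n xs)"

definition avg_mid_height :: "nat \<Rightarrow> real" where
  "avg_mid_height n = (\<Sum>xs\<in>sym_dyck_paths n. real_of_int (mid_height n xs)) / real (card (sym_dyck_paths n))"

end

theory Submission
  imports Defs "HOL-Analysis.Analysis" "HOL-Real_Asymp.Real_Asymp"
begin


lemma height_Nil[simp]: "height [] = 0" by (simp add: height_def)
lemma height_append[simp]: "height (xs @ ys) = height xs + height ys"
  by (simp add: height_def)
lemma height_snoc: "height (xs @ [b]) = height xs + (if b then 1 else -1)"
  by (simp add: height_def)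
lemma height_Cons: "height (b # xs) = height xs + (if b then 1 else -1)"
  by (simp add: height_def)
lemma height_single[simp]: "height [b] = (if b then 1 else -1)"
  by (simp add: height_def)
lemma height_map_Not[simp]: "height (map Not xs) = - height xs"
  by (induction xs) (auto simp: height_Cons)
lemma height_rev[simp]: "height (rev xs) = height xs"
  by (simp add: height_def rev_filter[symmetric])

definition NP :: "nat \<Rightarrow> bool list set" where
  "NP n = {xs. length xs = n \<and> (\<forall>k\<le>n. height (take k xs) \<ge> 0)}"

lemma finite_NP: "finite (NP n)"
proof -
  have "NP n \<subseteq> {xs. set xs \<subseteq> UNIV \<and> length xs = n}" by (auto simp: NP_def)
  thus ?thesis by (rule finite_subset) (rule finite_lists_length_eq, simp)
qed

lemma NP_height: "xs \<in> NP n \<Longrightarrow> height xs \<ge> 0"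
  by (auto simp: NP_def dest: spec[of _ n])

lemma NP_0: "NP 0 = {[]}" by (auto simp: NP_def)

lemma NP_Suc: "NP (Suc n) = (\<lambda>xs. xs @ [True]) ` NP n \<union> (\<lambda>xs. xs @ [False]) ` {xs\<in>NP n. height xs > 0}"
proof (intro equalityI subsetI)
  fix ys assume ys: "ys \<in> NP (Suc n)"
  then have len: "length ys = Suc n" by (simp add: NP_def)
  then obtain xs b where ysd: "ys = xs @ [b]"
    by (metis append_butlast_last_id length_0_conv nat.distinct(1))
  with len have lx: "length xs = n" by simp
  have xs: "xs \<in> NP n"
  proof -
    { fix k assume "k \<le> n"
      then have "take k ys = take k xs" using ysd lx by simp
      then have "height (take k xs) \<ge> 0" using ys \<open>k \<le> n\<close> unfolding NP_def by (metis (mono_tags, lifting) le_SucI mem_Collect_eq) }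
    thus ?thesis using lx by (simp add: NP_def)
  qed
  have "height ys \<ge> 0" using ys len by (auto simp: NP_def dest: spec[of _ "Suc n"])
  then show "ys \<in> (\<lambda>xs. xs @ [True]) ` NP n \<union> (\<lambda>xs. xs @ [False]) ` {xs\<in>NP n. height xs > 0}"
    using xs ysd by (cases b) (auto simp: height_snoc)
next
  fix ys assume ys: "ys \<in> (\<lambda>xs. xs @ [True]) ` NP n \<union> (\<lambda>xs. xs @ [False]) ` {xs\<in>NP n. height xs > 0}"
  then obtain xs b where ysd: "ys = xs @ [b]" and xs: "xs \<in> NP n" and hb: "\<not> b \<longrightarrow> height xs > 0"
    by auto
  have lx: "length xs = n" using xs by (simp add: NP_def)
  { fix k assume k: "k \<le> Suc n"
    have "height (take k ys) \<ge> 0"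
    proof (cases "k \<le> n")
      case True then show ?thesis using xs ysd lx by (auto simp: NP_def)
    next
      case False then have "k = Suc n" using k by simp
      then show ?thesis using ysd lx hb NP_height[OF xs] by (auto simp: height_snoc)
    qed }
  then show "ys \<in> NP (Suc n)" using ysd lx by (simp add: NP_def)
qed

lemma inj_snoc: "inj (\<lambda>xs. xs @ [b::bool])" by (auto intro: injI)

lemma card_P_Suc: "card (NP (Suc n)) = card (NP n) + card {xs\<in>NP n. height xs > 0}"
  unfolding NP_Suc
  by (subst card_Un_disjoint) (auto simp: finite_NP card_image inj_on_subset[OF inj_snoc])

lemma sum_P_Suc: "(\<Sum>xs\<in>NP (Suc n). height xs) =
   (\<Sum>xs\<in>NP n. height xs + 1) + (\<Sum>xs\<in>{xs\<in>NP n. height xs > 0}. height xs - 1)"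
  unfolding NP_Suc
  by (subst sum.union_disjoint) (auto simp: finite_NP sum.reindex inj_on_subset[OF inj_snoc] algebra_simps)

lemma S_plus_N: "(\<Sum>xs\<in>NP n. height xs) + int (card (NP n)) = 2 ^ n"
proof (induction n)
  case 0 then show ?case by (simp add: NP_0)
next
  case (Suc n)
  let ?Q = "{xs\<in>NP n. height xs > 0}"
  have fQ: "finite ?Q" using finite_NP by auto
  have a: "(\<Sum>xs\<in>?Q. height xs - 1) = (\<Sum>xs\<in>?Q. height xs) - int (card ?Q)"
    by (simp add: sum_subtractf)
  have b: "(\<Sum>xs\<in>?Q. height xs) = (\<Sum>xs\<in>NP n. height xs)"
    proof -
    have "(\<Sum>xs\<in>?Q. height xs) = (\<Sum>xs\<in>NP n. if height xs > 0 then height xs else 0)"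
      by (rule sum.inter_filter[OF finite_NP])
    also have "\<dots> = (\<Sum>xs\<in>NP n. height xs)"
      by (rule sum.cong) (use NP_height in \<open>auto simp: less_le\<close>)
    finally show ?thesis .
  qed
  have c: "(\<Sum>xs\<in>NP n. height xs + 1) = (\<Sum>xs\<in>NP n. height xs) + int (card (NP n))"
    by (simp add: sum.distrib)
  show ?case using Suc.IH unfolding sum_P_Suc card_P_Suc a b c by simp
qed



definition NA :: "nat \<Rightarrow> nat \<Rightarrow> bool list set" where
  "NA n k = {xs\<in>NP n. length (filter Not xs) = k}"

lemma height_D: "height xs = int (length xs) - 2 * int (length (filter Not xs))"
  using sum_length_filter_compl[of "\<lambda>s. s" xs] by (simp add: height_def)

lemma finite_A: "finite (NA n k)" using finite_NP by (simp add: NA_def)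

lemma NA_empty: "n < 2 * k \<Longrightarrow> NA n k = {}"
  using NP_height height_D by (fastforce simp: NA_def NP_def)

lemma NA_0: "NA 0 0 = {[]}" by (auto simp: NA_def NP_0)

lemma NA_Suc: "NA (Suc n) k = (\<lambda>xs. xs @ [True]) ` NA n k \<union>
   (\<lambda>xs. xs @ [False]) ` (if 0 < k \<and> 2 * k \<le> n + 1 then NA n (k - 1) else {})"
proof -
  have "NA (Suc n) k = (\<lambda>xs. xs @ [True]) ` NA n k \<union>
     (\<lambda>xs. xs @ [False]) ` {xs\<in>NP n. height xs > 0 \<and> Suc (length (filter Not xs)) = k}"
    unfolding NA_def NP_Suc by auto
  also have "{xs\<in>NP n. height xs > 0 \<and> Suc (length (filter Not xs)) = k} =
       (if 0 < k \<and> 2 * k \<le> n + 1 then NA n (k - 1) else {})"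
    by (auto simp: NA_def NP_def height_D)
  finally show ?thesis .
qed

lemma card_A_Suc: "card (NA (Suc n) k) = card (NA n k) +
   (if 0 < k \<and> 2 * k \<le> n + 1 then card (NA n (k - 1)) else 0)"
  unfolding NA_Suc
  by (subst card_Un_disjoint) (auto simp: finite_A card_image inj_on_subset[OF inj_snoc])

lemma card_A: "2 * k \<le> n + 1 \<Longrightarrow> card (NA n k) + (if 0 < k then n choose (k - 1) else 0) = n choose k"
proof (induction n arbitrary: k)
  case 0 then have "k = 0" by simp
  then show ?case by (simp add: NA_0)
next
  case (Suc n)
  show ?case
  proof (cases "2 * k = n + 2")
    case True
    then have "k > 0" by simp
    have e: "card (NA (Suc n) k) = 0" unfolding card_A_Suc using True NA_empty[of n k] by simp
    have "Suc n choose k = Suc n choose (Suc n - k)"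
      by (rule binomial_symmetric) (use True in simp)
    also have "Suc n - k = k - 1" using True by simp
    finally show ?thesis using e \<open>k>0\<close> by simp
  next
    case False
    then have k: "2 * k \<le> n + 1" using Suc.prems by simp
    show ?thesis
    proof (cases k)
      case 0 then show ?thesis using Suc.IH[of 0] by (simp add: card_A_Suc)
    next
      case (Suc j)
      have i1: "card (NA n k) + (n choose j) = n choose k" using Suc.IH[OF k] Suc by simp
      have i2: "card (NA n j) + (if 0 < j then n choose (j - 1) else 0) = n choose j"
        using Suc.IH[of j] k Suc by simp
      have c1: "Suc n choose k = (n choose j) + (n choose k)" using Suc by simp
      have c2: "Suc n choose j = (if 0 < j then n choose (j - 1) else 0) + (n choose j)"
        by (cases j) simp_all
      show ?thesis unfolding card_A_Suc using k Suc i1 i2 c1 c2 by simp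
    qed
  qed
qed

lemma sum_card_A: "2 * K \<le> n + 1 \<Longrightarrow> (\<Sum>k\<le>K. card (NA n k)) = n choose K"
proof (induction K)
  case 0 then show ?case using card_A[of 0 n] by simp
next
  case (Suc K)
  then show ?case using card_A[of "Suc K" n] by simp
qed

lemma card_P: "card (NP n) = n choose (n div 2)"
proof -
  have "(\<lambda>xs. length (filter Not xs)) ` NP n \<subseteq> {..n div 2}"
    using NP_height height_D by (fastforce simp: NP_def)
  then have "card (NP n) = (\<Sum>k\<le>n div 2. card (NA n k))"
    using sum.group[OF finite_NP finite_atMost, where g="\<lambda>xs. length (filter Not xs)" and h="\<lambda>_. 1::nat"]
    by (simp add: NA_def)
  also have "\<dots> = n choose (n div 2)" by (rule sum_card_A) simp
  finally show ?thesis .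
qed



definition mk_sym :: "bool list \<Rightarrow> bool list" where
  "mk_sym xs = xs @ map Not (rev xs)"

lemma sym_drop:
  assumes "symmetric_path n ys" "length ys = 2 * n"
  shows "drop n ys = map Not (rev (take n ys))"
proof (rule nth_equalityI)
  show "length (drop n ys) = length (map Not (rev (take n ys)))" using assms(2) by simp
next
  fix j assume "j < length (drop n ys)"
  then have j: "j < n" using assms(2) by simp
  have nj: "n + j < 2 * n" using j by simp
  have "ys ! (n + j) = (\<not> ys ! (2 * n - 1 - (n + j)))"
    using assms(1) nj unfolding symmetric_path_def by blast
  moreover have "2 * n - 1 - (n + j) = n - Suc j" using j by simp
  ultimately show "drop n ys ! j = map Not (rev (take n ys)) ! j"
    using j assms(2) by (simp add: rev_nth)
qed

lemma ext_take: assumes "ys \<in> sym_dyck_paths n" shows "mk_sym (take n ys) = ys"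
proof -
  have "symmetric_path n ys" "length ys = 2 * n" using assms by (auto simp: sym_dyck_paths_def dyck_path_def)
  from sym_drop[OF this] show ?thesis unfolding mk_sym_def by (metis append_take_drop_id)
qed

lemma take_in_P: assumes "ys \<in> sym_dyck_paths n" shows "take n ys \<in> NP n"
proof -
  have "dyck_path n ys" using assms by (simp add: sym_dyck_paths_def)
  then show ?thesis unfolding dyck_path_def NP_def by (auto simp: min_def)
qed

lemma height_split: "height xs = height (take j xs) + height (drop j xs)"
  by (metis append_take_drop_id height_append)

lemma ext_in: assumes xs: "xs \<in> NP n" shows "mk_sym xs \<in> sym_dyck_paths n"
proof -
  have lx: "length xs = n" using xs by (simp add: NP_def)
  have len: "length (mk_sym xs) = 2 * n" using lx by (simp add: mk_sym_def)
  have h0: "height (mk_sym xs) = 0" by (simp add: mk_sym_def)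
  have pre: "height (take k (mk_sym xs)) \<ge> 0" if k: "k \<le> 2 * n" for k
  proof (cases "k \<le> n")
    case True
    then show ?thesis using xs lx by (simp add: mk_sym_def NP_def)
  next
    case False
    have "take k (mk_sym xs) = xs @ map Not (take (k - n) (rev xs))"
      using False lx by (simp add: mk_sym_def take_map)
    also have "take (k - n) (rev xs) = rev (drop (2 * n - k) xs)"
      using lx False by (simp add: take_rev mult_2)
    finally have "height (take k (mk_sym xs)) = height xs - height (drop (2 * n - k) xs)" by simp
    also have "\<dots> = height (take (2 * n - k) xs)" using height_split[of xs "2*n-k"] by simp
    finally show ?thesis using xs k False by (simp add: NP_def)
  qed
  have sym: "symmetric_path n (mk_sym xs)"
    unfolding symmetric_path_def
  proof (intro allI impI)
    fix i assume i: "i < 2 * n"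
    show "mk_sym xs ! i = (\<not> mk_sym xs ! (2 * n - 1 - i))"
    proof (cases "i < n")
      case True
      have a: "\<not> (2 * n - 1 - i < n)" "2 * n - 1 - i - n = n - Suc i" "n - Suc (n - Suc i) = i"
        "n - Suc i < n" using True by auto
      show ?thesis using lx a True by (simp add: mk_sym_def nth_append rev_nth)
    next
      case False
      have a: "2 * n - Suc i < n" "n + n - Suc i = 2 * n - Suc i" using False i by auto
      show ?thesis using lx i a False by (simp add: mk_sym_def nth_append rev_nth)
    qed
  qed
  show ?thesis using len h0 pre sym by (simp add: sym_dyck_paths_def dyck_path_def)
qed

lemma bij: "bij_betw (take n) (sym_dyck_paths n) (NP n)"
proof (rule bij_betw_byWitness[where f'=mk_sym])
  show "\<forall>a\<in>sym_dyck_paths n. mk_sym (take n a) = a" using ext_take by blast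
  show "\<forall>a'\<in>NP n. take n (mk_sym a') = a'" by (auto simp: mk_sym_def NP_def)
  show "take n ` sym_dyck_paths n \<subseteq> NP n" using take_in_P by blast
  show "mk_sym ` NP n \<subseteq> sym_dyck_paths n" using ext_in by blast
qed

lemma avg_formula: "avg_mid_height n = (2 ^ n - real (n choose (n div 2))) / real (n choose (n div 2))"
proof -
  have s: "(\<Sum>xs\<in>sym_dyck_paths n. real_of_int (mid_height n xs)) = (\<Sum>xs\<in>NP n. real_of_int (height xs))"
    unfolding mid_height_def by (rule sum.reindex_bij_betw[OF bij])
  have c: "card (sym_dyck_paths n) = card (NP n)" by (rule bij_betw_same_card[OF bij])
  have "real_of_int (\<Sum>xs\<in>NP n. height xs) = 2 ^ n - real (card (NP n))"
    using arg_cong[OF S_plus_N[of n], of real_of_int] by simp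
  then show ?thesis unfolding avg_mid_height_def s c card_P[symmetric] by simp
qed



definition cq :: "nat \<Rightarrow> real" where "cq n = fact (2 * n) / (4 ^ n * (fact n)^2)"

lemma gb_rec: "(a::real) gchoose Suc n = (a gchoose n) * (a - real n) / (real n + 1)"
proof -
  have h: "(a gchoose n) * a = real n * (a gchoose n) + real (Suc n) * (a gchoose Suc n)"
    by (rule gbinomial_mult_1')
  have "real (Suc n) * (a gchoose Suc n) = (a gchoose n) * (a - real n)"
    using h by (simp add: algebra_simps)
  then show ?thesis by (simp add: eq_divide_eq algebra_simps)
qed

lemma cq_Suc: "cq (Suc n) = cq n * (2 * real n + 1) / (2 * (real n + 1))"
proof -
  have f1: "fact (2 * Suc n) = (2 * real n + 2) * (2 * real n + 1) * (fact (2 * n) :: real)"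
    by (simp add: fact_Suc algebra_simps)
  have f2: "fact (Suc n) = (real n + 1) * (fact n :: real)" by (simp add: fact_Suc)
  have p: "fact n > (0::real)" by simp
  have x: "(4::real) ^ Suc n = 4 * 4 ^ n" by simp
  have n0: "real n + 1 > 0" by simp
  show ?thesis unfolding cq_def f1 f2 x using p n0
    apply (simp add: divide_simps)
    apply (simp add: algebra_simps power2_eq_square)
    done
qed

lemma gchoose_half: "((-1/2 :: real) gchoose n) = (-1) ^ n * cq n"
proof (induction n)
  case 0 then show ?case by (simp add: cq_def)
next
  case (Suc n)
  have "((-1/2 :: real) gchoose Suc n) = (-1) ^ n * cq n * (-1/2 - real n) / (real n + 1)"
    unfolding gb_rec Suc.IH ..
  also have "\<dots> = (-1) ^ Suc n * (cq n * (2 * real n + 1) / (2 * (real n + 1)))"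
    by (simp add: field_simps)
  finally show ?case unfolding cq_Suc .
qed

lemma choose_even: "real ((2 * m) choose m) = 4 ^ m * cq m"
proof -
  have "real ((2*m) choose m) = fact (2*m) / (fact m * fact (2*m - m))" by (rule binomial_fact) simp
  also have "2 * m - m = m" by simp
  finally show ?thesis unfolding cq_def by (simp add: power2_eq_square)
qed

lemma choose_odd: "real ((2 * m + 1) choose m) = 4 ^ m * cq m * (2 * real m + 1) / (real m + 1)"
proof -
  have "real ((2*m+1) choose m) = fact (2*m+1) / (fact m * fact (2*m+1 - m))" by (rule binomial_fact) simp
  also have "2 * m + 1 - m = Suc m" by simp
  also have "fact (2*m+1) = (2 * real m + 1) * (fact (2 * m) :: real)" by (simp add: fact_Suc)
  also have "fact (Suc m) = (real m + 1) * (fact m :: real)" by (simp add: fact_Suc)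
  finally have e: "real ((2*m+1) choose m) = (2 * real m + 1) * fact (2 * m) / (fact m * ((real m + 1) * fact m))" .
  have p: "fact m > (0::real)" by simp
  have n0: "real m + 1 > 0" by simp
  show ?thesis unfolding e cq_def using p n0
    apply (simp add: divide_simps)
    apply (simp add: algebra_simps power2_eq_square)
    done
qed

lemma cq_pos: "cq n > 0" by (simp add: cq_def)

lemma cq_lim: "(\<lambda>n. cq n * sqrt (real n)) \<longlonglongrightarrow> 1 / sqrt pi"
proof -
  have "(\<lambda>n. ((-1/2::real) gchoose n) / ((-1)^n / exp ((-1/2+1) * of_real (ln (real n))))) \<longlonglongrightarrow>
           inverse (Gamma (- (-1/2::real)))"
    by (rule gbinomial_asymptotic)
  also have "inverse (Gamma (- (-1/2::real))) = 1 / sqrt pi"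
  proof -
    have h: "- (-1/2::real) = 1/2" by simp
    have "inverse (Gamma (- (-1/2::real))) = inverse (sqrt pi)" unfolding h Gamma_one_half_real ..
    then show ?thesis by (simp only: inverse_eq_divide)
  qed
  finally have l: "(\<lambda>n. ((-1/2::real) gchoose n) / ((-1)^n / exp ((-1/2+1) * of_real (ln (real n))))) \<longlonglongrightarrow> 1 / sqrt pi" .
  show ?thesis
  proof (rule Lim_transform_eventually[OF l])
    show "\<forall>\<^sub>F n in sequentially. ((-1/2::real) gchoose n) / ((-1)^n / exp ((-1/2+1) * of_real (ln (real n)))) = cq n * sqrt (real n)"
      using eventually_gt_at_top[of "0::nat"]
    proof eventually_elim
      case (elim n)
      have a: "(-1/2+1::real) * of_real (ln (real n)) = 1/2 * ln (real n)" by simp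
      have b: "exp (1/2 * ln (real n)) = sqrt (real n)"
        using elim powr_half_sqrt[of "real n"] unfolding powr_def by simp
      have c: "((-1::real)^n) \<noteq> 0" by simp
      show ?case unfolding a b gchoose_half using c by (simp add: field_simps)
    qed
  qed
qed


lemma even_equiv:
  "(\<lambda>m::nat. (2 ^ (2 * m) - real ((2 * m) choose m)) / real ((2 * m) choose m)) \<sim>[at_top] (\<lambda>m. sqrt (pi * real m))"
proof (rule asymp_equivI')
  have t: "(\<lambda>m. 1 / (cq m * sqrt (real m) * sqrt pi) - 1 / sqrt (pi * real m)) \<longlonglongrightarrow> 1 / (1 / sqrt pi * sqrt pi) - 0"
    by (intro tendsto_intros cq_lim; (simp; fail)?; real_asymp)
  show "(\<lambda>m. (2 ^ (2 * m) - real ((2 * m) choose m)) / real ((2 * m) choose m) / sqrt (pi * real m)) \<longlonglongrightarrow> 1"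
  proof (rule Lim_transform_eventually)
    show "(\<lambda>m. 1 / (cq m * sqrt (real m) * sqrt pi) - 1 / sqrt (pi * real m)) \<longlonglongrightarrow> 1"
      using t by simp
    show "\<forall>\<^sub>F m in sequentially. 1 / (cq m * sqrt (real m) * sqrt pi) - 1 / sqrt (pi * real m) =
       (2 ^ (2 * m) - real ((2 * m) choose m)) / real ((2 * m) choose m) / sqrt (pi * real m)"
      using eventually_gt_at_top[of "0::nat"]
    proof eventually_elim
      case (elim m)
      have qp: "cq m > 0" by (rule cq_pos)
      have p4: "(2::real) ^ (2 * m) = 4 ^ m" by (simp add: power_mult)
      have sq: "sqrt (pi * real m) = sqrt pi * sqrt (real m)" by (rule real_sqrt_mult)
      have sp: "sqrt pi > 0" "sqrt (real m) > 0" "(4::real) ^ m > 0" using elim by auto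
      show ?case unfolding choose_even p4 sq using qp sp
        apply (simp add: divide_simps)
        apply (simp add: algebra_simps)
        done
    qed
  qed
qed

lemma odd_equiv:
  "(\<lambda>m::nat. (2 ^ (2 * m + 1) - real ((2 * m + 1) choose m)) / real ((2 * m + 1) choose m)) \<sim>[at_top] (\<lambda>m. sqrt (pi * real m))"
proof (rule asymp_equivI')
  have t: "(\<lambda>m. (2 * (real m + 1) / (2 * real m + 1)) * (1 / (cq m * sqrt (real m) * sqrt pi)) - 1 / sqrt (pi * real m)) \<longlonglongrightarrow> 1 * (1 / (1 / sqrt pi * sqrt pi)) - 0"
    by (intro tendsto_intros cq_lim; (simp; fail)?; real_asymp)
  show "(\<lambda>m. (2 ^ (2 * m + 1) - real ((2 * m + 1) choose m)) / real ((2 * m + 1) choose m) / sqrt (pi * real m)) \<longlonglongrightarrow> 1"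
  proof (rule Lim_transform_eventually)
    show "(\<lambda>m. (2 * (real m + 1) / (2 * real m + 1)) * (1 / (cq m * sqrt (real m) * sqrt pi)) - 1 / sqrt (pi * real m)) \<longlonglongrightarrow> 1"
      using t by simp
    show "\<forall>\<^sub>F m in sequentially. (2 * (real m + 1) / (2 * real m + 1)) * (1 / (cq m * sqrt (real m) * sqrt pi)) - 1 / sqrt (pi * real m) =
       (2 ^ (2 * m + 1) - real ((2 * m + 1) choose m)) / real ((2 * m + 1) choose m) / sqrt (pi * real m)"
      using eventually_gt_at_top[of "0::nat"]
    proof eventually_elim
      case (elim m)
      have qp: "cq m > 0" by (rule cq_pos)
      have p4: "(2::real) ^ (2 * m + 1) = 2 * 4 ^ m" by (simp add: power_mult)
      have sq: "sqrt (pi * real m) = sqrt pi * sqrt (real m)" by (rule real_sqrt_mult)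
      have sp: "sqrt pi > 0" "sqrt (real m) > 0" "(4::real) ^ m > 0" "2 * real m + 1 > 0" "real m + 1 > 0" using elim by auto
      show ?case unfolding choose_odd p4 sq using qp sp
        apply (simp add: divide_simps)
        apply (simp add: algebra_simps)
        done
    qed
  qed
qed



theorem corollary4p4:
  shows "(\<forall>m::nat. avg_mid_height (2 * m) =
            (2 ^ (2 * m) - real ((2 * m) choose m)) / real ((2 * m) choose m))
       \<and> (\<forall>m::nat. avg_mid_height (2 * m + 1) =
            (2 ^ (2 * m + 1) - real ((2 * m + 1) choose m)) / real ((2 * m + 1) choose m))
       \<and> (\<lambda>m::nat. avg_mid_height (2 * m)) \<sim>[at_top] (\<lambda>m. sqrt (pi * real m))
       \<and> (\<lambda>m::nat. avg_mid_height (2 * m + 1)) \<sim>[at_top] (\<lambda>m. sqrt (pi * real m))"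
proof -
  have e: "\<And>m. avg_mid_height (2 * m) =
            (2 ^ (2 * m) - real ((2 * m) choose m)) / real ((2 * m) choose m)"
    using avg_formula by simp
  have o: "\<And>m. avg_mid_height (2 * m + 1) =
            (2 ^ (2 * m + 1) - real ((2 * m + 1) choose m)) / real ((2 * m + 1) choose m)"
    using avg_formula by simp
  have ee: "(\<lambda>m::nat. avg_mid_height (2 * m)) = (\<lambda>m::nat. (2 ^ (2 * m) - real ((2 * m) choose m)) / real ((2 * m) choose m))"
    using e by (rule ext)
  have oo: "(\<lambda>m::nat. avg_mid_height (2 * m + 1)) = (\<lambda>m::nat. (2 ^ (2 * m + 1) - real ((2 * m + 1) choose m)) / real ((2 * m + 1) choose m))"
    using o by (rule ext)
  show ?thesis unfolding ee oo using e o even_equiv odd_equiv by blast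
qed

end
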